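(* Let $X$ be a topological space. The bounded continuous valuations $\nu$ on $X$ that take only finitely many values are exactly the finite linear combinations $\sum_{i=1}^n a_i\, e_{C_i}$, where each $C_i$ is an irreducible closed subset of $X$ and each $a_i\in(0,\infty)$.
   Context: A valuation on $X$ is a map $\nu:\mathcal OX\to[0,\infty]$ with $\nu(\emptyset)=0$, monotone and modular; continuous if it preserves directed suprema of opens; bounded if $\nu(X)<\infty$. A non-empty subset $A$ is irreducible if $A\subseteq B\cup C$ with $B,C$ closed implies $A\subseteq B$ or $A\subseteq C$. For an irreducible closed $C$, $e_C:\mathcal OX\to[0,\infty]$ maps $U$ to $1$ if $U\cap C\neq\emptyset$ and to $0$ otherwise. (The empty sum, $n=0$, is the zero valuation.) *)

theory Defs
  imports "HOL-Analysis.Analysis" "HOL-Library.Extended_Nonnegative_Real"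
begin

text \<open>A valuation on the space X: a map from open sets to [0,\<infinity>] (ennreal);
  only its values on open sets of X matter.\<close>
definition valuation :: "'a topology \<Rightarrow> ('a set \<Rightarrow> ennreal) \<Rightarrow> bool" where
  "valuation X \<nu> \<longleftrightarrow>
     \<nu> {} = 0 \<and>
     (\<forall>U V. openin X U \<and> openin X V \<and> U \<subseteq> V \<longrightarrow> \<nu> U \<le> \<nu> V) \<and>
     (\<forall>U V. openin X U \<and> openin X V \<longrightarrow> \<nu> U + \<nu> V = \<nu> (U \<union> V) + \<nu> (U \<inter> V))"

definition directed_opens :: "'a topology \<Rightarrow> 'a set set \<Rightarrow> bool" where
  "directed_opens X D \<longleftrightarrow> D \<noteq> {} \<and> (\<forall>U\<in>D. openin X U) \<and>
     (\<forall>U\<in>D. \<forall>V\<in>D. \<exists>W\<in>D. U \<subseteq> W \<and> V \<subseteq> W)"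

definition continuous_valuation :: "'a topology \<Rightarrow> ('a set \<Rightarrow> ennreal) \<Rightarrow> bool" where
  "continuous_valuation X \<nu> \<longleftrightarrow> valuation X \<nu> \<and>
     (\<forall>D. directed_opens X D \<longrightarrow> \<nu> (\<Union>D) = (SUP U\<in>D. \<nu> U))"

definition bounded_valuation :: "'a topology \<Rightarrow> ('a set \<Rightarrow> ennreal) \<Rightarrow> bool" where
  "bounded_valuation X \<nu> \<longleftrightarrow> \<nu> (topspace X) < \<infinity>"

definition irreducible_in :: "'a topology \<Rightarrow> 'a set \<Rightarrow> bool" where
  "irreducible_in X A \<longleftrightarrow> A \<noteq> {} \<and> A \<subseteq> topspace X \<and>
     (\<forall>B C. closedin X B \<and> closedin X C \<and> A \<subseteq> B \<union> C \<longrightarrow> A \<subseteq> B \<or> A \<subseteq> C)"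

definition point_val :: "'a set \<Rightarrow> 'a set \<Rightarrow> ennreal" where
  "point_val C U = (if U \<inter> C \<noteq> {} then 1 else 0)"

end

theory Submission imports Defs begin

definition pvr :: "'a set \<Rightarrow> 'a set \<Rightarrow> real" where
  "pvr C U = (if U \<inter> C \<noteq> {} then 1 else 0)"

lemma irred_meet:
  assumes "irreducible_in X C" "openin X U" "openin X V" "U \<inter> C \<noteq> {}" "V \<inter> C \<noteq> {}"
  shows "U \<inter> V \<inter> C \<noteq> {}"
proof
  assume h: "U \<inter> V \<inter> C = {}"
  have sub: "C \<subseteq> topspace X" using assms(1) unfolding irreducible_in_def by blast
  have "C \<subseteq> (topspace X - U) \<union> (topspace X - V)" using h sub by blast
  moreover have "closedin X (topspace X - U)" "closedin X (topspace X - V)"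
    using assms(2,3) by auto
  ultimately have "C \<subseteq> topspace X - U \<or> C \<subseteq> topspace X - V"
    using assms(1) unfolding irreducible_in_def by blast
  then show False using assms(4,5) by blast
qed

lemma pvr_modular:
  assumes "irreducible_in X C" "openin X U" "openin X V"
  shows "pvr C U + pvr C V = pvr C (U \<union> V) + pvr C (U \<inter> V)"
  using irred_meet[OF assms] unfolding pvr_def by auto

lemma core_k:
  fixes \<mu> :: "'a set \<Rightarrow> real"
  assumes "card (\<mu> ` {U. openin X U}) = k"
  and "\<mu> {} = 0"
  and "\<And>U V. openin X U \<Longrightarrow> openin X V \<Longrightarrow> U \<subseteq> V \<Longrightarrow> \<mu> U \<le> \<mu> V"
  and "\<And>U V. openin X U \<Longrightarrow> openin X V \<Longrightarrow> \<mu> U + \<mu> V = \<mu> (U \<union> V) + \<mu> (U \<inter> V)"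
  and "\<And>D. directed_opens X D \<Longrightarrow> \<exists>W\<in>D. \<mu> (\<Union>D) = \<mu> W"
  and "finite (\<mu> ` {U. openin X U})"
  shows "\<exists>(n::nat) C a. (\<forall>i<n. closedin X (C i) \<and> irreducible_in X (C i) \<and> 0 < a i) \<and>
     (\<forall>U. openin X U \<longrightarrow> \<mu> U = (\<Sum>i<n. a i * pvr (C i) U))"
  using assms
proof (induction k arbitrary: \<mu> rule: less_induct)
  case (less k \<mu>)
  note card = less.prems(1) and e = less.prems(2) and mono = less.prems(3)
    and modu = less.prems(4) and cont = less.prems(5) and fin = less.prems(6)
  have nonneg: "0 \<le> \<mu> U" if "openin X U" for U
    using mono[of "{}" U] e that by auto
  show ?case
  proof (cases "\<forall>U. openin X U \<longrightarrow> \<mu> U = 0")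
    case True
    show ?thesis apply (rule exI[where x="0::nat"]) using True by auto
  next
    case False
    then obtain U0 where U0: "openin X U0" "\<mu> U0 \<noteq> 0" by blast
    define P where "P = {v \<in> \<mu> ` {U. openin X U}. 0 < v}"
    have finP: "finite P" using fin unfolding P_def by auto
    have "\<mu> U0 \<in> P" using U0 nonneg[OF U0(1)] unfolding P_def by auto
    then have Pne: "P \<noteq> {}" by blast
    define c where "c = Min P"
    have "c \<in> P" using finP Pne unfolding c_def by simp
    then obtain U where U: "openin X U" "\<mu> U = c" and cpos: "0 < c" unfolding P_def by auto
    have cmin: "c \<le> \<mu> W" if "openin X W" "0 < \<mu> W" for W
      unfolding c_def using finP that unfolding P_def by (intro Min_le) auto
    define D0 where "D0 = {V. openin X V \<and> \<mu> (V \<inter> U) = 0}"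
    define N where "N = \<Union>D0"
    have openN: "openin X N" unfolding N_def D0_def by auto
    have union0: "\<mu> ((V1 \<union> V2) \<inter> U) = 0" if "V1 \<in> D0" "V2 \<in> D0" for V1 V2
    proof -
      have o: "openin X (V1 \<inter> U)" "openin X (V2 \<inter> U)" using that U(1) unfolding D0_def by auto
      have "\<mu> (V1 \<inter> U) + \<mu> (V2 \<inter> U) = \<mu> ((V1 \<inter> U) \<union> (V2 \<inter> U)) + \<mu> ((V1 \<inter> U) \<inter> (V2 \<inter> U))"
        using modu[OF o] .
      moreover have "(V1 \<inter> U) \<union> (V2 \<inter> U) = (V1 \<union> V2) \<inter> U" by blast
      moreover have "0 \<le> \<mu> ((V1 \<inter> U) \<inter> (V2 \<inter> U))" "0 \<le> \<mu> ((V1 \<union> V2) \<inter> U)"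
        using o that U(1) unfolding D0_def by (auto intro!: nonneg)
      ultimately show ?thesis using that unfolding D0_def by auto
    qed
    define D1 where "D1 = (\<lambda>V. V \<inter> U) ` D0"
    have "directed_opens X D1"
      unfolding directed_opens_def
    proof (intro conjI ballI)
      have "{} \<in> D0" unfolding D0_def using e by simp
      then show "D1 \<noteq> {}" unfolding D1_def by blast
    next
      fix A assume "A \<in> D1"
      then obtain V where "V \<in> D0" "A = V \<inter> U" unfolding D1_def by blast
      then show "openin X A" unfolding D0_def using U(1) by auto
    next
      fix A B assume "A \<in> D1" "B \<in> D1"
      then obtain V1 V2 where V: "V1 \<in> D0" "V2 \<in> D0" "A = V1 \<inter> U" "B = V2 \<inter> U"
        unfolding D1_def by blast
      have "openin X (V1 \<union> V2)" using V(1,2) unfolding D0_def by auto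
      then have "V1 \<union> V2 \<in> D0" using union0[OF V(1,2)] unfolding D0_def by simp
      then have "(V1 \<union> V2) \<inter> U \<in> D1" unfolding D1_def by (rule imageI)
      moreover have "A \<subseteq> (V1 \<union> V2) \<inter> U" "B \<subseteq> (V1 \<union> V2) \<inter> U" using V(3,4) by auto
      ultimately show "\<exists>W\<in>D1. A \<subseteq> W \<and> B \<subseteq> W" by blast
    qed
    then obtain W where "W \<in> D1" "\<mu> (\<Union>D1) = \<mu> W" using cont by blast
    moreover have "\<Union>D1 = N \<inter> U" unfolding D1_def N_def by blast
    ultimately have NU: "\<mu> (N \<inter> U) = 0" unfolding D1_def D0_def by auto
    define C where "C = topspace X - N"
    have closedC: "closedin X C" unfolding C_def using openN by auto
    have F: "\<mu> (W \<inter> U) = c * pvr C W" if "openin X W" for W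
    proof (cases "W \<inter> C = {}")
      case True
      then have "W \<subseteq> N" using openin_subset[OF that] unfolding C_def by blast
      then have "\<mu> (W \<inter> U) \<le> \<mu> (N \<inter> U)" using that U(1) openN by (intro mono) auto
      moreover have "0 \<le> \<mu> (W \<inter> U)" using that U(1) by (intro nonneg) auto
      ultimately show ?thesis using True NU unfolding pvr_def by auto
    next
      case False
      have "\<mu> (W \<inter> U) \<le> c" using U that by (metis inf_le2 mono openin_Int)
      moreover have "\<mu> (W \<inter> U) \<noteq> 0"
      proof
        assume "\<mu> (W \<inter> U) = 0"
        then have "W \<in> D0" unfolding D0_def using that by auto
        then have "W \<subseteq> N" unfolding N_def by blast
        then show False using False unfolding C_def by blast
      qed
      moreover have "0 \<le> \<mu> (W \<inter> U)" using that U(1) by (intro nonneg) auto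
      ultimately have "\<mu> (W \<inter> U) = c" using cmin[of "W \<inter> U"] that U(1) by fastforce
      then show ?thesis using False unfolding pvr_def by auto
    qed
    have UC: "U \<inter> C \<noteq> {}"
    proof
      assume "U \<inter> C = {}"
      then have "\<mu> (U \<inter> U) = 0" using F[OF U(1)] unfolding pvr_def by auto
      then show False using U cpos by auto
    qed
    have irrC: "irreducible_in X C"
      unfolding irreducible_in_def
    proof (intro conjI allI impI)
      show "C \<noteq> {}" using UC by blast
      show "C \<subseteq> topspace X" unfolding C_def by blast
    next
      fix B1 B2 assume h: "closedin X B1 \<and> closedin X B2 \<and> C \<subseteq> B1 \<union> B2"
      show "C \<subseteq> B1 \<or> C \<subseteq> B2"
      proof (rule ccontr)
        assume nn: "\<not> (C \<subseteq> B1 \<or> C \<subseteq> B2)"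
        define V1 where "V1 = topspace X - B1"
        define V2 where "V2 = topspace X - B2"
        have o: "openin X V1" "openin X V2" using h unfolding V1_def V2_def by auto
        have m1: "V1 \<inter> C \<noteq> {}" "V2 \<inter> C \<noteq> {}" using nn unfolding V1_def V2_def C_def by blast+
        have m2: "(V1 \<inter> V2) \<inter> C = {}" using h unfolding V1_def V2_def by blast
        have a1: "\<mu> (V1 \<inter> U) = c" "\<mu> (V2 \<inter> U) = c" using F[OF o(1)] F[OF o(2)] m1 unfolding pvr_def by auto
        have a2: "\<mu> ((V1 \<inter> V2) \<inter> U) = 0" using F[of "V1 \<inter> V2"] o m2 unfolding pvr_def by auto
        have oo: "openin X (V1 \<inter> U)" "openin X (V2 \<inter> U)" using o U(1) by auto
        have "\<mu> (V1 \<inter> U) + \<mu> (V2 \<inter> U) = \<mu> ((V1 \<inter> U) \<union> (V2 \<inter> U)) + \<mu> ((V1 \<inter> U) \<inter> (V2 \<inter> U))"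
          using modu[OF oo] .
        moreover have "(V1 \<inter> U) \<inter> (V2 \<inter> U) = (V1 \<inter> V2) \<inter> U" by blast
        moreover have "\<mu> ((V1 \<inter> U) \<union> (V2 \<inter> U)) \<le> c" using U oo by (intro mono[of _ U, simplified U(2)]) auto
        ultimately have "c + c \<le> c" using a1 a2 by auto
        then show False using cpos by auto
      qed
    qed
    define \<mu>' where "\<mu>' W = \<mu> W - c * pvr C W" for W
    have e': "\<mu>' {} = 0" unfolding \<mu>'_def pvr_def using e by auto
    have mono': "\<mu>' V1 \<le> \<mu>' V2" if "openin X V1" "openin X V2" "V1 \<subseteq> V2" for V1 V2
    proof (cases "V1 \<inter> C = {} \<and> V2 \<inter> C \<noteq> {}")
      case True
      have o: "openin X V1" "openin X (V2 \<inter> U)" using that U(1) by auto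
      have "\<mu> V1 + \<mu> (V2 \<inter> U) = \<mu> (V1 \<union> (V2 \<inter> U)) + \<mu> (V1 \<inter> (V2 \<inter> U))" using modu[OF o] .
      moreover have "V1 \<inter> (V2 \<inter> U) = V1 \<inter> U" using that by blast
      moreover have "\<mu> (V1 \<inter> U) = 0" "\<mu> (V2 \<inter> U) = c" using F that True unfolding pvr_def by auto
      moreover have "\<mu> (V1 \<union> (V2 \<inter> U)) \<le> \<mu> V2" using that o by (intro mono) auto
      ultimately show ?thesis using True unfolding \<mu>'_def pvr_def by auto
    next
      case False
      then have "pvr C V1 = pvr C V2" using that unfolding pvr_def by auto
      then show ?thesis unfolding \<mu>'_def using mono[OF that] by auto
    qed
    have modu': "\<mu>' V1 + \<mu>' V2 = \<mu>' (V1 \<union> V2) + \<mu>' (V1 \<inter> V2)" if "openin X V1" "openin X V2" for V1 V2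
    proof -
      have "c * pvr C V1 + c * pvr C V2 = c * pvr C (V1 \<union> V2) + c * pvr C (V1 \<inter> V2)"
        using pvr_modular[OF irrC that] by (metis distrib_left)
      then show ?thesis using modu[OF that] unfolding \<mu>'_def by linarith
    qed
    have cont': "\<exists>W\<in>D. \<mu>' (\<Union>D) = \<mu>' W" if dD: "directed_opens X D" for D
    proof -
      have oD: "openin X (\<Union>D)" using dD unfolding directed_opens_def by auto
      obtain W1 where W1: "W1 \<in> D" "\<mu> (\<Union>D) = \<mu> W1" using cont[OF dD] by blast
      show ?thesis
      proof (cases "(\<Union>D) \<inter> C = {}")
        case True
        then have "W1 \<inter> C = {}" using W1 by blast
        then show ?thesis using True W1 unfolding \<mu>'_def pvr_def by auto
      next
        case False
        then obtain W2 where W2: "W2 \<in> D" "W2 \<inter> C \<noteq> {}" by blast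
        then obtain W where W: "W \<in> D" "W1 \<subseteq> W" "W2 \<subseteq> W" using W1 dD unfolding directed_opens_def by meson
        have oW: "openin X W" "openin X W1" using W W1 dD unfolding directed_opens_def by auto
        have "\<mu> W1 \<le> \<mu> W" using oW W by (intro mono) auto
        moreover have "\<mu> W \<le> \<mu> (\<Union>D)" using oW oD W by (intro mono) auto
        ultimately have "\<mu> W = \<mu> (\<Union>D)" using W1 by auto
        moreover have "W \<inter> C \<noteq> {}" using W W2 by blast
        ultimately have "\<mu>' (\<Union>D) = \<mu>' W" using False unfolding \<mu>'_def pvr_def by simp
        then show ?thesis using W(1) by blast
      qed
    qed
    define S where "S = \<mu> ` {U. openin X U}"
    have sub: "\<mu>' ` {U. openin X U} \<subseteq> (\<lambda>v. v - c) ` (S - {0})"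
    proof
      fix y assume "y \<in> \<mu>' ` {U. openin X U}"
      then obtain W where W: "openin X W" "y = \<mu>' W" by blast
      show "y \<in> (\<lambda>v. v - c) ` (S - {0})"
      proof (cases "W \<inter> C = {}")
        case False
        have "c \<le> \<mu> W" using F[OF W(1)] False U(1) W(1) mono[of "W \<inter> U" W] unfolding pvr_def by auto
        then have "\<mu> W \<in> S - {0}" using cpos W unfolding S_def by auto
        then show ?thesis using W False unfolding \<mu>'_def pvr_def by auto
      next
        case True
        have o: "openin X (W \<union> U)" using W U by auto
        have "\<mu> W + \<mu> U = \<mu> (W \<union> U) + \<mu> (W \<inter> U)" using modu W U by auto
        moreover have "\<mu> (W \<inter> U) = 0" using F[OF W(1)] True unfolding pvr_def by auto
        ultimately have eq: "\<mu> (W \<union> U) = \<mu> W + c" using U by auto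
        have "\<mu> (W \<union> U) \<in> S" using o unfolding S_def by blast
        moreover have "\<mu> (W \<union> U) \<noteq> 0" using eq nonneg[OF W(1)] cpos by auto
        ultimately have "\<mu> (W \<union> U) \<in> S - {0}" by blast
        moreover have "y = \<mu> (W \<union> U) - c" using eq True W unfolding \<mu>'_def pvr_def by auto
        ultimately show ?thesis by auto
      qed
    qed
    have finS: "finite S" using fin unfolding S_def .
    have "0 \<in> S" unfolding S_def using e by force
    then have "card (S - {0}) < card S" using finS by (intro card_Diff1_less)
    moreover have "card (\<mu>' ` {U. openin X U}) \<le> card (S - {0})"
    proof -
      have "card (\<mu>' ` {U. openin X U}) \<le> card ((\<lambda>v. v - c) ` (S - {0}))"
        using finS by (intro card_mono[OF _ sub]) auto
      also have "\<dots> \<le> card (S - {0})" by (rule card_image_le) (use finS in auto)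
      finally show ?thesis .
    qed
    moreover have fin': "finite (\<mu>' ` {U. openin X U})" using finS by (intro finite_subset[OF sub]) auto
    moreover have "card S = k" using card unfolding S_def .
    ultimately have lt: "card (\<mu>' ` {U. openin X U}) < k" by linarith
    have ex: "\<exists>(n::nat) C a. (\<forall>i<n. closedin X (C i) \<and> irreducible_in X (C i) \<and> 0 < a i) \<and>
     (\<forall>U. openin X U \<longrightarrow> \<mu>' U = (\<Sum>i<n. a i * pvr (C i) U))"
      by (rule less.IH[OF lt refl e' mono' modu' cont' fin'])
    then obtain n :: nat and C' a where h: "(\<forall>i<n. closedin X (C' i) \<and> irreducible_in X (C' i) \<and> 0 < a i) \<and>
     (\<forall>U. openin X U \<longrightarrow> \<mu>' U = (\<Sum>i<n. a i * pvr (C' i) U))"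
      by blast
    have h1: "\<forall>i<n. closedin X (C' i) \<and> irreducible_in X (C' i) \<and> 0 < a i"
      using h by (rule conjunct1)
    have h2: "\<forall>U. openin X U \<longrightarrow> \<mu>' U = (\<Sum>i<n. a i * pvr (C' i) U)" using h by (rule conjunct2)
    have A: "\<forall>i<Suc n. closedin X ((C'(n := C)) i) \<and> irreducible_in X ((C'(n := C)) i) \<and> 0 < (a(n := c)) i"
      using h1 closedC irrC cpos by (auto simp: less_Suc_eq)
    have B: "\<forall>V. openin X V \<longrightarrow> \<mu> V = (\<Sum>i<Suc n. (a(n := c)) i * pvr ((C'(n := C)) i) V)"
    proof (intro allI impI)
      fix V assume "openin X V"
      then have "\<mu> V = \<mu>' V + c * pvr C V" unfolding \<mu>'_def by simp
      also have "\<dots> = (\<Sum>i<n. a i * pvr (C' i) V) + c * pvr C V" using h2 \<open>openin X V\<close> by simp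
      also have "(\<Sum>i<n. a i * pvr (C' i) V) = (\<Sum>i<n. (a(n := c)) i * pvr ((C'(n := C)) i) V)"
        by (rule sum.cong) auto
      also have "(\<Sum>i<n. (a(n := c)) i * pvr ((C'(n := C)) i) V) + c * pvr C V
          = (\<Sum>i<Suc n. (a(n := c)) i * pvr ((C'(n := C)) i) V)"
        by (simp add: sum.lessThan_Suc)
      finally show "\<mu> V = (\<Sum>i<Suc n. (a(n := c)) i * pvr ((C'(n := C)) i) V)" .
    qed
    show ?thesis using A B by blast
  qed
qed


lemma point_val_pvr: "point_val C U = ennreal (pvr C U)"
  unfolding point_val_def pvr_def by auto

lemma fwd:
  fixes X :: "'a topology" and \<nu> :: "'a set \<Rightarrow> ennreal"
  assumes cv: "continuous_valuation X \<nu>" and bd: "bounded_valuation X \<nu>"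
    and fin: "finite (\<nu> ` {U. openin X U})"
  shows "\<exists>(n::nat) (C :: nat \<Rightarrow> 'a set) (a :: nat \<Rightarrow> ennreal).
            (\<forall>i<n. closedin X (C i) \<and> irreducible_in X (C i) \<and> 0 < a i \<and> a i < \<infinity>) \<and>
            (\<forall>U. openin X U \<longrightarrow> \<nu> U = (\<Sum>i<n. a i * point_val (C i) U))"
proof -
  have val: "valuation X \<nu>" using cv unfolding continuous_valuation_def by blast
  have e: "\<nu> {} = 0" using val unfolding valuation_def by blast
  have mono: "\<nu> U \<le> \<nu> V" if "openin X U" "openin X V" "U \<subseteq> V" for U V
    using val that unfolding valuation_def by blast
  have modu: "\<nu> U + \<nu> V = \<nu> (U \<union> V) + \<nu> (U \<inter> V)" if "openin X U" "openin X V" for U V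
    using val that unfolding valuation_def by blast
  have cont: "\<nu> (\<Union>D) = (SUP U\<in>D. \<nu> U)" if "directed_opens X D" for D
    using cv that unfolding continuous_valuation_def by blast
  have ltop: "\<nu> U < top" if "openin X U" for U
  proof -
    have "\<nu> U \<le> \<nu> (topspace X)" using mono[OF that] that openin_subset by auto
    then show ?thesis using bd unfolding bounded_valuation_def by auto
  qed
  define \<mu> where "\<mu> U = enn2real (\<nu> U)" for U
  have nu_mu: "\<nu> U = ennreal (\<mu> U)" if "openin X U" for U
    unfolding \<mu>_def using ltop[OF that] by simp
  have e': "\<mu> {} = 0" unfolding \<mu>_def using e by simp
  have mono': "\<mu> U \<le> \<mu> V" if "openin X U" "openin X V" "U \<subseteq> V" for U V
    unfolding \<mu>_def using mono[OF that] ltop[OF that(2)] by (rule enn2real_mono)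
  have modu': "\<mu> U + \<mu> V = \<mu> (U \<union> V) + \<mu> (U \<inter> V)" if "openin X U" "openin X V" for U V
  proof -
    have o: "openin X (U \<union> V)" "openin X (U \<inter> V)" using that by auto
    have nn: "0 \<le> \<mu> W" for W unfolding \<mu>_def by simp
    have "ennreal (\<mu> U) + ennreal (\<mu> V) = ennreal (\<mu> (U \<union> V)) + ennreal (\<mu> (U \<inter> V))"
      using modu[OF that] by (simp only: nu_mu[OF that(1)] nu_mu[OF that(2)] nu_mu[OF o(1)] nu_mu[OF o(2)])
    then have "ennreal (\<mu> U + \<mu> V) = ennreal (\<mu> (U \<union> V) + \<mu> (U \<inter> V))"
      by (simp only: ennreal_plus[OF nn nn])
    then show ?thesis by (simp only: ennreal_inj[OF add_nonneg_nonneg[OF nn nn] add_nonneg_nonneg[OF nn nn]])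
  qed
  have cont': "\<exists>W\<in>D. \<mu> (\<Union>D) = \<mu> W" if dD: "directed_opens X D" for D
  proof -
    have "\<nu> ` D \<subseteq> \<nu> ` {U. openin X U}" using dD unfolding directed_opens_def by auto
    then have "finite (\<nu> ` D)" using fin by (rule finite_subset)
    moreover have "\<nu> ` D \<noteq> {}" using dD unfolding directed_opens_def by auto
    ultimately have "Sup (\<nu> ` D) \<in> \<nu> ` D"
      by (intro finite_Sup_in) (auto simp: sup_max max_def)
    then obtain W where "W \<in> D" "\<nu> (\<Union>D) = \<nu> W" using cont[OF dD] by auto
    then show ?thesis unfolding \<mu>_def by auto
  qed
  have fin': "finite (\<mu> ` {U. openin X U})"
  proof -
    have "\<mu> ` {U. openin X U} = enn2real ` (\<nu> ` {U. openin X U})" unfolding \<mu>_def by auto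
    then show ?thesis using fin by simp
  qed
  have ex: "\<exists>(n::nat) C a. (\<forall>i<n. closedin X (C i) \<and> irreducible_in X (C i) \<and> 0 < a i) \<and>
     (\<forall>U. openin X U \<longrightarrow> \<mu> U = (\<Sum>i<n. a i * pvr (C i) U))"
    by (rule core_k[OF refl e' mono' modu' cont' fin'])
  then obtain n :: nat and C and a :: "nat \<Rightarrow> real" where h: "(\<forall>i<n. closedin X (C i) \<and> irreducible_in X (C i) \<and> 0 < a i) \<and>
     (\<forall>U. openin X U \<longrightarrow> \<mu> U = (\<Sum>i<n. a i * pvr (C i) U))"
    by blast
  have h1: "\<forall>i<n. closedin X (C i) \<and> irreducible_in X (C i) \<and> 0 < a i" using h by (rule conjunct1)
  have h2: "\<forall>U. openin X U \<longrightarrow> \<mu> U = (\<Sum>i<n. a i * pvr (C i) U)" using h by (rule conjunct2)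
  have A: "\<forall>i<n. closedin X (C i) \<and> irreducible_in X (C i) \<and> 0 < ennreal (a i) \<and> ennreal (a i) < \<infinity>"
    using h1 by simp
  have B: "\<forall>U. openin X U \<longrightarrow> \<nu> U = (\<Sum>i<n. ennreal (a i) * point_val (C i) U)"
  proof (intro allI impI)
    fix U assume oU: "openin X U"
    have nn: "0 \<le> a i * pvr (C i) U" if "i < n" for i
      using h1 that unfolding pvr_def by auto
    have "\<nu> U = ennreal (\<Sum>i<n. a i * pvr (C i) U)" using nu_mu[OF oU] h2 oU by simp
    also have "\<dots> = (\<Sum>i<n. ennreal (a i * pvr (C i) U))" using nn by (subst sum_ennreal) auto
    also have "\<dots> = (\<Sum>i<n. ennreal (a i) * point_val (C i) U)"
      using h1 by (intro sum.cong refl) (auto simp: point_val_pvr ennreal_mult pvr_def)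
    finally show "\<nu> U = (\<Sum>i<n. ennreal (a i) * point_val (C i) U)" .
  qed
  show ?thesis
    apply (rule exI[where x=n], rule exI[where x=C], rule exI[where x="\<lambda>i. ennreal (a i)"])
    using A B by (intro conjI)
qed


lemma point_val_mono: "U \<subseteq> V \<Longrightarrow> point_val C U \<le> point_val C V"
  unfolding point_val_def by auto

lemma point_val_modular:
  assumes "irreducible_in X C" "openin X U" "openin X V"
  shows "point_val C U + point_val C V = point_val C (U \<union> V) + point_val C (U \<inter> V)"
  using irred_meet[OF assms] unfolding point_val_def by auto

lemma directed_pick:
  assumes dD: "directed_opens X D"
  shows "\<exists>W\<in>D. \<forall>i<(n::nat). point_val (C i) (\<Union>D) \<le> point_val (C i) W"
proof (induction n)
  case 0
  then show ?case using dD unfolding directed_opens_def by auto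
next
  case (Suc m)
  then obtain W where W: "W \<in> D" "\<forall>i<m. point_val (C i) (\<Union>D) \<le> point_val (C i) W" by blast
  show ?case
  proof (cases "(\<Union>D) \<inter> C m = {}")
    case True
    then have "point_val (C m) (\<Union>D) = 0" unfolding point_val_def by simp
    then show ?thesis using W by (auto simp: less_Suc_eq)
  next
    case False
    then obtain W2 where W2: "W2 \<in> D" "W2 \<inter> C m \<noteq> {}" by blast
    then obtain W' where W': "W' \<in> D" "W \<subseteq> W'" "W2 \<subseteq> W'" using W dD unfolding directed_opens_def by meson
    have "\<forall>i<Suc m. point_val (C i) (\<Union>D) \<le> point_val (C i) W'"
    proof (intro allI impI)
      fix i assume "i < Suc m"
      then show "point_val (C i) (\<Union>D) \<le> point_val (C i) W'"
      proof (cases "i < m")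
        case True
        then show ?thesis using W(2) point_val_mono[OF W'(2), of "C i"] by (meson order_trans)
      next
        case False
        then have "i = m" using \<open>i < Suc m\<close> by simp
        moreover have "W' \<inter> C m \<noteq> {}" using W2 W' by blast
        ultimately show ?thesis unfolding point_val_def by simp
      qed
    qed
    then show ?thesis using W' by blast
  qed
qed

lemma bwd:
  fixes X :: "'a topology" and \<nu> :: "'a set \<Rightarrow> ennreal"
  assumes h1: "\<forall>i<n. closedin X (C i) \<and> irreducible_in X (C i) \<and> 0 < a i \<and> a i < \<infinity>"
    and h2: "\<forall>U. openin X U \<longrightarrow> \<nu> U = (\<Sum>i<(n::nat). a i * point_val (C i) U)"
  shows "continuous_valuation X \<nu> \<and> bounded_valuation X \<nu> \<and> finite (\<nu> ` {U. openin X U})"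
proof -
  define s where "s U = (\<Sum>i<n. a i * point_val (C i) U)" for U
  have nu_s: "\<nu> U = s U" if "openin X U" for U using h2 that unfolding s_def by blast
  have e: "\<nu> {} = 0" using nu_s[of "{}"] unfolding s_def point_val_def by simp
  have mono: "\<nu> U \<le> \<nu> V" if "openin X U" "openin X V" "U \<subseteq> V" for U V
  proof -
    have "s U \<le> s V" unfolding s_def
      by (intro sum_mono mult_left_mono point_val_mono that(3)) auto
    then show ?thesis using nu_s that by simp
  qed
  have modu: "\<nu> U + \<nu> V = \<nu> (U \<union> V) + \<nu> (U \<inter> V)" if "openin X U" "openin X V" for U V
  proof -
    have "s U + s V = (\<Sum>i<n. a i * (point_val (C i) U + point_val (C i) V))"
      unfolding s_def by (simp add: sum.distrib distrib_left)
    also have "\<dots> = (\<Sum>i<n. a i * (point_val (C i) (U \<union> V) + point_val (C i) (U \<inter> V)))"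
      using h1 point_val_modular[OF _ that] by (intro sum.cong refl) auto
    also have "\<dots> = s (U \<union> V) + s (U \<inter> V)"
      unfolding s_def by (simp add: sum.distrib distrib_left)
    moreover have "openin X (U \<union> V)" "openin X (U \<inter> V)" using that by auto
    ultimately show ?thesis using nu_s that by simp
  qed
  have val: "valuation X \<nu>" unfolding valuation_def using e mono modu by blast
  have cont: "\<nu> (\<Union>D) = (SUP U\<in>D. \<nu> U)" if dD: "directed_opens X D" for D
  proof (rule antisym)
    have oD: "openin X (\<Union>D)" using dD unfolding directed_opens_def by auto
    obtain W where W: "W \<in> D" "\<forall>i<n. point_val (C i) (\<Union>D) \<le> point_val (C i) W"
      using directed_pick[OF dD] by blast
    have oW: "openin X W" using W dD unfolding directed_opens_def by auto
    have "s (\<Union>D) \<le> s W" unfolding s_def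
      using W(2) by (intro sum_mono mult_left_mono) auto
    then have "\<nu> (\<Union>D) \<le> \<nu> W" using nu_s oD oW by simp
    also have "\<dots> \<le> (SUP U\<in>D. \<nu> U)" using W(1) by (rule SUP_upper)
    finally show "\<nu> (\<Union>D) \<le> (SUP U\<in>D. \<nu> U)" .
    show "(SUP U\<in>D. \<nu> U) \<le> \<nu> (\<Union>D)"
      using dD oD unfolding directed_opens_def by (intro SUP_least mono) auto
  qed
  have bd: "bounded_valuation X \<nu>"
  proof -
    have "a i * point_val (C i) (topspace X) < \<infinity>" if "i < n" for i
      using h1 that unfolding point_val_def by auto
    then have "s (topspace X) < \<infinity>" unfolding s_def by simp
    then show ?thesis unfolding bounded_valuation_def using nu_s[of "topspace X"] by simp
  qed
  have fin: "finite (\<nu> ` {U. openin X U})"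
  proof -
    have "\<nu> ` {U. openin X U} \<subseteq> (\<lambda>I. \<Sum>i\<in>I. a i) ` Pow {..<n}"
    proof
      fix y assume "y \<in> \<nu> ` {U. openin X U}"
      then obtain U where U: "openin X U" "y = \<nu> U" by blast
      have "y = (\<Sum>i<n. if U \<inter> C i \<noteq> {} then a i else 0)"
        using U nu_s unfolding s_def point_val_def by (simp add: if_distrib cong: if_cong)
      also have "\<dots> = (\<Sum>i\<in>{i\<in>{..<n}. U \<inter> C i \<noteq> {}}. a i)"
        by (rule sum.inter_filter[symmetric]) simp
      finally show "y \<in> (\<lambda>I. \<Sum>i\<in>I. a i) ` Pow {..<n}" by blast
    qed
    then show ?thesis by (rule finite_subset) simp
  qed
  show ?thesis using val cont bd fin unfolding continuous_valuation_def by blast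
qed

theorem proposition4p3:
  fixes X :: "'a topology" and \<nu> :: "'a set \<Rightarrow> ennreal"
  shows "(continuous_valuation X \<nu> \<and> bounded_valuation X \<nu> \<and>
          finite (\<nu> ` {U. openin X U}))
     \<longleftrightarrow> (\<exists>(n::nat) (C :: nat \<Rightarrow> 'a set) (a :: nat \<Rightarrow> ennreal).
            (\<forall>i<n. closedin X (C i) \<and> irreducible_in X (C i) \<and> 0 < a i \<and> a i < \<infinity>) \<and>
            (\<forall>U. openin X U \<longrightarrow> \<nu> U = (\<Sum>i<n. a i * point_val (C i) U)))"
proof
  assume "continuous_valuation X \<nu> \<and> bounded_valuation X \<nu> \<and> finite (\<nu> ` {U. openin X U})"
  then show "\<exists>(n::nat) (C :: nat \<Rightarrow> 'a set) (a :: nat \<Rightarrow> ennreal).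
            (\<forall>i<n. closedin X (C i) \<and> irreducible_in X (C i) \<and> 0 < a i \<and> a i < \<infinity>) \<and>
            (\<forall>U. openin X U \<longrightarrow> \<nu> U = (\<Sum>i<n. a i * point_val (C i) U))"
    using fwd by blast
next
  assume "\<exists>(n::nat) (C :: nat \<Rightarrow> 'a set) (a :: nat \<Rightarrow> ennreal).
            (\<forall>i<n. closedin X (C i) \<and> irreducible_in X (C i) \<and> 0 < a i \<and> a i < \<infinity>) \<and>
            (\<forall>U. openin X U \<longrightarrow> \<nu> U = (\<Sum>i<n. a i * point_val (C i) U))"
  then obtain n :: nat and C :: "nat \<Rightarrow> 'a set" and a :: "nat \<Rightarrow> ennreal" where
    "(\<forall>i<n. closedin X (C i) \<and> irreducible_in X (C i) \<and> 0 < a i \<and> a i < \<infinity>) \<and>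
            (\<forall>U. openin X U \<longrightarrow> \<nu> U = (\<Sum>i<n. a i * point_val (C i) U))" by blast
  then show "continuous_valuation X \<nu> \<and> bounded_valuation X \<nu> \<and> finite (\<nu> ` {U. openin X U})"
    using bwd[of n X C a \<nu>] by blast
qed

end
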